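(* The BSDE is stabilizable if and only if $S_0\subset\mathcal C$, where $S_0:=\{y\in\mathbb R^d: Ay=0\}$. Consequently: (i) if $\mathbb S$ consists of a single ergodic class ($m=1$), then the BSDE is stabilizable; (ii) if $\mathbb S=\bigcup_{k=1}^m\mathbb S_k$ is the partition into ergodic classes, then the BSDE is stabilizable if and only if $\mathsf 1_{\mathbb S_k}\in\mathcal C$ for all $k=1,\dots,m$.
   Context: Let $\mathbb S=\{1,\dots,d\}$. Functions on $\mathbb S$ are identified with vectors in $\mathbb R^d$; $\mathsf 1$ is the all-ones vector, $\mathsf 1_D$ the indicator of $D\subset\mathbb S$, and $gh$ the entrywise product. $A$ is the rate matrix of a continuous-time Markov chain on $\mathbb S$ (off-diagonal entries nonnegative, rows summing to zero). $\mathbb S=\bigcup_{k=1}^m\mathbb S_k$ is its partition into ergodic classes, each a closed irreducible class. $h\in\mathbb R^d$ is the observation function of the model $Z_t=\int_0^th(X_s)\,\mathrm ds+W_t$. The BSDE is $$-\mathrm dY_t=(AY_t+hU_t+hV_t)\,\mathrm dt-V_t\,\mathrm dZ_t$$ with admissible (observation-adapted, square-integrable) controls $U$. Its controllable subspace $\mathcal C$ is the set of $Y_0$ reachable from some deterministic terminal condition $Y_T=c\mathsf 1$ using some admissible control. Equivalently (by a known result), $\mathcal C$ is the smallest subspace of $\mathbb R^d$ containing $\mathsf 1$ and closed under $g\mapsto Ag$ and $g\mapsto gh$. Since $\mathcal C$ is $A$-invariant, $A$ induces a map $\bar A_{uc}$ on $\mathbb R^d/\mathcal C$; in an orthonormal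 basis adapted to $\mathcal C\oplus\mathcal C^\perp$, $A$ is block upper triangular and $\bar A_{uc}$ is its lower-right block. The BSDE is stabilizable if either $\mathcal C=\mathbb R^d$, or $\mathcal C\ne\mathbb R^d$ and $\bar A_{uc}$ is Hurwitz. *)

theory Defs
  imports "HOL-Analysis.Analysis"
begin

text \<open>States are the elements of a finite type 'n; functions on the state space are
  vectors in real^'n; the rate matrix is a real^'n^'n.  Entrywise product of vectors
  is the componentwise multiplication (*) on real^'n, and 1 is the all-ones vector.\<close>

definition rate_matrix :: "real^'n^'n \<Rightarrow> bool" where
  "rate_matrix A \<longleftrightarrow> (\<forall>i j. i \<noteq> j \<longrightarrow> A$i$j \<ge> 0) \<and> (\<forall>i. (\<Sum>j\<in>UNIV. A$i$j) = 0)"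

definition trans_rel :: "real^'n^'n \<Rightarrow> ('n \<times> 'n) set" where
  "trans_rel A = {(i,j). i \<noteq> j \<and> A$i$j > 0}"

definition ergodic_class :: "real^'n^'n \<Rightarrow> 'n set \<Rightarrow> bool" where
  "ergodic_class A K \<longleftrightarrow> K \<noteq> {}
     \<and> (\<forall>i\<in>K. \<forall>j. (i,j) \<in> trans_rel A \<longrightarrow> j \<in> K)
     \<and> (\<forall>i\<in>K. \<forall>j\<in>K. (i,j) \<in> (trans_rel A \<inter> (K \<times> K))\<^sup>*)"

definition ergodic_partition :: "real^'n^'n \<Rightarrow> 'n set set \<Rightarrow> bool" where
  "ergodic_partition A P \<longleftrightarrow> (\<forall>K\<in>P. ergodic_class A K) \<and> \<Union>P = UNIV
     \<and> (\<forall>K\<in>P. \<forall>L\<in>P. K \<noteq> L \<longrightarrow> K \<inter> L = {})"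

definition ctrl_space :: "real^'n^'n \<Rightarrow> real^'n \<Rightarrow> (real^'n) set" where
  "ctrl_space A h = \<Inter>{V. subspace V \<and> 1 \<in> V \<and> (\<forall>g\<in>V. A *v g \<in> V) \<and> (\<forall>g\<in>V. g * h \<in> V)}"

definition indic_vec :: "'n set \<Rightarrow> real^'n" where
  "indic_vec D = (\<chi> i. if i \<in> D then 1 else 0)"

definition cplx_sub :: "(real^'n) set \<Rightarrow> (complex^'n) set" where
  "cplx_sub C = {v. (\<chi> i. Re (v$i)) \<in> C \<and> (\<chi> i. Im (v$i)) \<in> C}"

definition cplx_mat :: "real^'n^'n \<Rightarrow> complex^'n^'n" where
  "cplx_mat A = (\<chi> i j. complex_of_real (A$i$j))"

text \<open>lambda is a (complex) eigenvalue of the map induced by A on the quotient R^d / C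
  (C assumed A-invariant), i.e. of the lower-right block A_uc.\<close>
definition quot_eigenvalue :: "real^'n^'n \<Rightarrow> (real^'n) set \<Rightarrow> complex \<Rightarrow> bool" where
  "quot_eigenvalue A C z \<longleftrightarrow>
     (\<exists>v. v \<notin> cplx_sub C \<and> cplx_mat A *v v - z *s v \<in> cplx_sub C)"

definition quot_hurwitz :: "real^'n^'n \<Rightarrow> (real^'n) set \<Rightarrow> bool" where
  "quot_hurwitz A C \<longleftrightarrow> (\<forall>z. quot_eigenvalue A C z \<longrightarrow> Re z < 0)"

definition stabilizable :: "real^'n^'n \<Rightarrow> real^'n \<Rightarrow> bool" where
  "stabilizable A h \<longleftrightarrow> ctrl_space A h = UNIV
     \<or> (ctrl_space A h \<noteq> UNIV \<and> quot_hurwitz A (ctrl_space A h))"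

end

theory Submission
  imports Defs
begin

lemma inj_self_surj:
  fixes f :: "'a::euclidean_space \<Rightarrow> 'a"
  assumes "linear f" "subspace S" "f ` S \<subseteq> S" "inj_on f S"
  shows "f ` S = S"
proof -
  have "span S = S" using assms(2) by (simp add: span_eq_iff)
  then have "dim (f ` S) = dim S" using dim_image_eq[OF assms(1), of S] assms(4) by metis
  moreover have "subspace (f ` S)" using linear_subspace_image[OF assms(1,2)] .
  ultimately show ?thesis using subspace_dim_equal[of "f ` S" S] assms by simp
qed

lemma ex_max_on:
  fixes f :: "'a \<Rightarrow> real"
  assumes "finite K" "K \<noteq> {}"
  shows "\<exists>i\<in>K. \<forall>j\<in>K. f j \<le> f i"
proof -
  have "Max (f ` K) \<in> f ` K" using assms by simp
  then obtain i where "i \<in> K" "f i = Max (f ` K)" by auto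
  then show ?thesis using assms by (metis Max_ge finite_imageI imageI)
qed

lemma ctrl_sub: "subspace (ctrl_space A h)"
  unfolding ctrl_space_def by (rule subspace_Inter) auto

lemma ctrl_one: "1 \<in> ctrl_space A h"
  unfolding ctrl_space_def by auto

lemma ctrl_A: "g \<in> ctrl_space A h \<Longrightarrow> A *v g \<in> ctrl_space A h"
  unfolding ctrl_space_def by auto

lemma row_formula:
  assumes "rate_matrix A"
  shows "(A *v v)$i = (\<Sum>j\<in>UNIV. A$i$j * (v$j - v$i))"
proof -
  have "(\<Sum>j\<in>UNIV. A$i$j * (v$j - v$i)) = (\<Sum>j\<in>UNIV. A$i$j * v$j) - (\<Sum>j\<in>UNIV. A$i$j) * v$i"
    by (simp add: algebra_simps sum_subtractf sum_distrib_right sum_distrib_left)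
  also have "\<dots> = (\<Sum>j\<in>UNIV. A$i$j * v$j)" using assms unfolding rate_matrix_def by simp
  finally show ?thesis by (simp add: matrix_vector_mult_def)
qed

lemma closed_zero:
  assumes "rate_matrix A" "ergodic_class A K" "i \<in> K" "j \<notin> K"
  shows "A$i$j = 0"
proof -
  have "i \<noteq> j" using assms by auto
  then have "A$i$j \<ge> 0" using assms(1) unfolding rate_matrix_def by auto
  moreover have "\<not> A$i$j > 0"
    using assms(2-4) \<open>i \<noteq> j\<close> unfolding ergodic_class_def trans_rel_def by auto
  ultimately show ?thesis by simp
qed

lemma term_nonpos:
  assumes "rate_matrix A" "ergodic_class A K" "i \<in> K" "\<forall>j\<in>K. v$j \<le> v$i"
  shows "A$i$j * (v$j - v$i) \<le> 0"
proof (cases "j \<in> K")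
  case True
  show ?thesis
  proof (cases "j = i")
    case False
    then have "A$i$j \<ge> 0" using assms(1) unfolding rate_matrix_def by auto
    then show ?thesis using assms(4) True by (simp add: mult_nonneg_nonpos)
  qed simp
next
  case False
  then show ?thesis using closed_zero[OF assms(1,2,3) False] by simp
qed

lemma mp_le:
  assumes "rate_matrix A" "ergodic_class A K" "i \<in> K" "\<forall>j\<in>K. v$j \<le> v$i"
  shows "(A *v v)$i \<le> 0"
  unfolding row_formula[OF assms(1)]
  by (rule sum_nonpos) (use term_nonpos[OF assms] in auto)

lemma mp_step:
  assumes "rate_matrix A" "ergodic_class A K" "i \<in> K" "\<forall>j\<in>K. v$j \<le> v$i"
    and "(A *v v)$i = 0" and "(i,j) \<in> trans_rel A"
  shows "v$j = v$i"
proof -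
  have "(\<Sum>j\<in>UNIV. - (A$i$j * (v$j - v$i))) = 0"
    using assms(5) unfolding row_formula[OF assms(1)] by (simp add: sum_negf)
  then have "\<forall>j\<in>UNIV. - (A$i$j * (v$j - v$i)) = 0"
    using sum_nonneg_eq_0_iff[of UNIV "\<lambda>j. - (A$i$j * (v$j - v$i))"] term_nonpos[OF assms(1-4)]
    by auto
  then have "A$i$j * (v$j - v$i) = 0" by auto
  moreover have "A$i$j > 0" using assms(6) unfolding trans_rel_def by auto
  ultimately show ?thesis by simp
qed

lemma harmonic_const:
  assumes "rate_matrix A" "ergodic_class A K" "A *v w = 0" "i \<in> K" "j \<in> K"
  shows "w$i = w$j"
proof -
  have fin: "finite K" by simp
  obtain i0 where i0: "i0 \<in> K" "\<forall>j\<in>K. w$j \<le> w$i0"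
    using ex_max_on[OF fin, of "\<lambda>j. w$j"] assms(2) unfolding ergodic_class_def by auto
  have key: "w$k = w$i0" if "(i0,k) \<in> (trans_rel A \<inter> K \<times> K)\<^sup>*" for k
    using that
  proof (induction rule: rtrancl_induct)
    case base then show ?case by simp
  next
    case (step y z)
    then have yK: "y \<in> K" and tr: "(y,z) \<in> trans_rel A" by auto
    have "\<forall>j\<in>K. w$j \<le> w$y" using i0 step.IH by simp
    moreover have "(A *v w)$y = 0" using assms(3) by simp
    ultimately have "w$z = w$y" using mp_step[OF assms(1,2) yK _ _ tr] by blast
    then show ?case using step.IH by simp
  qed
  have "w$i = w$i0" using key assms(2,4) i0(1) unfolding ergodic_class_def by blast
  moreover have "w$j = w$i0" using key assms(2,5) i0(1) unfolding ergodic_class_def by blast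
  ultimately show ?thesis by simp
qed


lemma part_class:
  assumes "ergodic_partition A P"
  obtains K where "K \<in> P" "i \<in> K"
  using assms unfolding ergodic_partition_def by blast

lemma semisimple:
  assumes "rate_matrix A" "ergodic_partition A P" "A *v (A *v v) = 0"
  shows "A *v v = 0"
proof -
  have "(A *v v)$i = 0" for i
  proof -
    obtain K where K: "K \<in> P" "i \<in> K" using part_class[OF assms(2)] by blast
    have eK: "ergodic_class A K" using K assms(2) unfolding ergodic_partition_def by auto
    have ne: "K \<noteq> {}" using K by auto
    obtain a where a: "a \<in> K" "\<forall>j\<in>K. v$j \<le> v$a" using ex_max_on[of K "\<lambda>j. v$j"] ne by auto
    obtain b where b: "b \<in> K" "\<forall>j\<in>K. (-v)$j \<le> (-v)$b" using ex_max_on[of K "\<lambda>j. (-v)$j"] ne by auto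
    have "(A *v v)$a \<le> 0" using mp_le[OF assms(1) eK a] .
    moreover have "(A *v (-v))$b \<le> 0" using mp_le[OF assms(1) eK b] .
    then have "(A *v v)$b \<ge> 0" by (simp add: matrix_vector_mult_def sum_negf)
    moreover have "(A *v v)$i = (A *v v)$a"
      by (rule harmonic_const[OF assms(1) eK assms(3) K(2) a(1)])
    moreover have "(A *v v)$i = (A *v v)$b"
      by (rule harmonic_const[OF assms(1) eK assms(3) K(2) b(1)])
    ultimately show ?thesis by linarith
  qed
  then show ?thesis by (simp add: vec_eq_iff)
qed

lemma A_indic:
  assumes "rate_matrix A" "ergodic_partition A P" "K \<in> P"
  shows "A *v indic_vec K = 0"
proof -
  have "(A *v indic_vec K)$i = 0" for i
  proof -
    obtain L where L: "L \<in> P" "i \<in> L" using part_class[OF assms(2)] by blast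
    have eL: "ergodic_class A L" using L assms(2) unfolding ergodic_partition_def by auto
    show ?thesis
    proof (cases "L = K")
      case True
      have "\<forall>j\<in>L. (indic_vec K)$j \<le> (indic_vec K)$i" "\<forall>j\<in>L. (-indic_vec K)$j \<le> (-indic_vec K)$i"
        using True L by (auto simp: indic_vec_def)
      from mp_le[OF assms(1) eL L(2) this(1)] mp_le[OF assms(1) eL L(2) this(2)]
      show ?thesis by (simp add: matrix_vector_mult_def sum_negf)
    next
      case False
      then have dis: "L \<inter> K = {}" using assms(2,3) L unfolding ergodic_partition_def by auto
      have z: "A$i$j * (indic_vec K)$j = 0" for j
      proof (cases "j \<in> K")
        case True
        then have "j \<notin> L" using dis by auto
        then show ?thesis using closed_zero[OF assms(1) eL L(2)] by simp
      qed (simp add: indic_vec_def)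
      have "(\<Sum>j\<in>UNIV. A$i$j * (indic_vec K)$j) = 0" by (rule sum.neutral) (use z in simp)
      then show ?thesis by (simp add: matrix_vector_mult_def)
    qed
  qed
  then show ?thesis by (simp add: vec_eq_iff)
qed

lemma kernel_span:
  assumes "rate_matrix A" "ergodic_partition A P" "A *v y = 0"
  shows "y = (\<Sum>K\<in>P. y$(SOME j. j \<in> K) *\<^sub>R indic_vec K)"
proof -
  have "y$i = (\<Sum>K\<in>P. y$(SOME j. j \<in> K) *\<^sub>R indic_vec K)$i" for i
  proof -
    obtain L where L: "L \<in> P" "i \<in> L" using part_class[OF assms(2)] by blast
    have eL: "ergodic_class A L" using L assms(2) unfolding ergodic_partition_def by auto
    have "(\<Sum>K\<in>P. y$(SOME j. j \<in> K) *\<^sub>R indic_vec K)$i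
        = (\<Sum>K\<in>P. if K = L then y$(SOME j. j \<in> K) else 0)"
    unfolding sum_component
    proof (rule sum.cong)
      fix K assume "K \<in> P"
      show "(y$(SOME j. j \<in> K) *\<^sub>R indic_vec K) $ i = (if K = L then y$(SOME j. j \<in> K) else 0)"
      proof (cases "K = L")
        case True then show ?thesis using L by (simp add: indic_vec_def)
      next
        case False
        have "K \<inter> L = {}" using assms(2) L(1) \<open>K \<in> P\<close> False unfolding ergodic_partition_def by blast
        then have "i \<notin> K" using L(2) by blast
        then show ?thesis using False by (simp add: indic_vec_def)
      qed
    qed simp
    also have "\<dots> = y$(SOME j. j \<in> L)"
    proof -
      have "finite P" by simp
      then show ?thesis using L(1) sum.delta[of P L "\<lambda>K. y$(SOME j. j \<in> K)"] by simp
    qed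
    also have "\<dots> = y$i"
    proof -
      have "(SOME j. j \<in> L) \<in> L" using L(2) by (rule someI)
      then show ?thesis by (rule harmonic_const[OF assms(1) eL assms(3)]) (rule L(2))
    qed
    finally show ?thesis by (rule sym)
  qed
  then show ?thesis unfolding vec_eq_iff by blast
qed

lemma ker_sub_iff:
  assumes "rate_matrix A" "ergodic_partition A P" "subspace C"
  shows "{y. A *v y = 0} \<subseteq> C \<longleftrightarrow> (\<forall>K\<in>P. indic_vec K \<in> C)"
proof
  assume "{y. A *v y = 0} \<subseteq> C"
  then show "\<forall>K\<in>P. indic_vec K \<in> C"
  proof (intro ballI)
    fix K assume S: "{y. A *v y = 0} \<subseteq> C" and K: "K \<in> P"
    have "A *v indic_vec K = 0" by (rule A_indic[OF assms(1,2) K])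
    then show "indic_vec K \<in> C" using S by blast
  qed
next
  assume H: "\<forall>K\<in>P. indic_vec K \<in> C"
  show "{y. A *v y = 0} \<subseteq> C"
  proof
    fix y assume "y \<in> {y. A *v y = 0}"
    then have "A *v y = 0" by simp
    then have eq: "y = (\<Sum>K\<in>P. y$(SOME j. j \<in> K) *\<^sub>R indic_vec K)"
      by (rule kernel_span[OF assms(1,2)])
    have sumC: "(\<Sum>K\<in>P. y$(SOME j. j \<in> K) *\<^sub>R indic_vec K) \<in> C"
    proof (rule subspace_sum[OF assms(3)])
      fix K assume "K \<in> P"
      then show "y$(SOME j. j \<in> K) *\<^sub>R indic_vec K \<in> C"
        by (intro subspace_scale[OF assms(3)]) (use H in blast)
    qed
    from sumC show "y \<in> C" by (simp only: eq[symmetric])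
  qed
qed

lemma real_quot:
  assumes "rate_matrix A" "ergodic_partition A P" "subspace C"
    and inv: "\<And>g. g \<in> C \<Longrightarrow> A *v g \<in> C" and ker: "{y. A *v y = 0} \<subseteq> C"
    and v: "A *v v \<in> C"
  shows "v \<in> C"
proof -
  define R where "R = range ((*v) A) \<inter> C"
  have lin: "linear ((*v) A)" by simp
  have subR: "subspace R" unfolding R_def
    by (rule subspace_inter[OF linear_subspace_image[OF lin subspace_UNIV] assms(3)])
  have img: "(*v) A ` R \<subseteq> R" unfolding R_def using inv by blast
  have inj: "inj_on ((*v) A) R"
  proof (rule inj_onI)
    fix x y assume "x \<in> R" "y \<in> R" "A *v x = A *v y"
    then obtain x' y' where "x = A *v x'" "y = A *v y'" unfolding R_def by auto
    then have "A *v (A *v (x' - y')) = 0" using \<open>A *v x = A *v y\<close>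
      by (simp add: matrix_vector_mult_diff_distrib)
    then have "A *v (x' - y') = 0" using semisimple[OF assms(1,2)] by blast
    then show "x = y" using \<open>x = A *v x'\<close> \<open>y = A *v y'\<close>
      by (simp add: matrix_vector_mult_diff_distrib)
  qed
  have "(*v) A ` R = R" using inj_self_surj[OF lin subR img inj] .
  moreover have "A *v v \<in> R" unfolding R_def using v by blast
  ultimately obtain c where c: "c \<in> R" "A *v c = A *v v" by (metis imageE)
  then have "A *v (v - c) = 0" by (simp add: matrix_vector_mult_diff_distrib)
  then have "v - c \<in> C" using ker by auto
  moreover have "c \<in> C" using c unfolding R_def by blast
  ultimately have "(v - c) + c \<in> C" using subspace_add[OF assms(3)] by blast
  then show ?thesis by simp
qed


definition rvec :: "complex^'n \<Rightarrow> real^'n" where "rvec v = (\<chi> i. Re (v$i))"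
definition ivec :: "complex^'n \<Rightarrow> real^'n" where "ivec v = (\<chi> i. Im (v$i))"

lemma cplx_sub_iff: "v \<in> cplx_sub C \<longleftrightarrow> rvec v \<in> C \<and> ivec v \<in> C"
  unfolding cplx_sub_def rvec_def ivec_def by simp

lemma rvec_mat: "rvec (cplx_mat A *v v) = A *v rvec v"
  by (simp add: vec_eq_iff rvec_def cplx_mat_def matrix_vector_mult_def)

lemma ivec_mat: "ivec (cplx_mat A *v v) = A *v ivec v"
  by (simp add: vec_eq_iff ivec_def cplx_mat_def matrix_vector_mult_def)

lemma rvec_f: "rvec (cplx_mat A *v u - z *s u) = A *v rvec u - Re z *\<^sub>R rvec u + Im z *\<^sub>R ivec u"
proof -
  have "rvec (cplx_mat A *v u - z *s u) = rvec (cplx_mat A *v u) - rvec (z *s u)"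
    by (simp add: vec_eq_iff rvec_def)
  moreover have "rvec (z *s u) = Re z *\<^sub>R rvec u - Im z *\<^sub>R ivec u"
    by (simp add: vec_eq_iff rvec_def ivec_def)
  ultimately show ?thesis by (simp add: rvec_mat)
qed

lemma ivec_f: "ivec (cplx_mat A *v u - z *s u) = A *v ivec u - Re z *\<^sub>R ivec u - Im z *\<^sub>R rvec u"
proof -
  have "ivec (cplx_mat A *v u - z *s u) = ivec (cplx_mat A *v u) - ivec (z *s u)"
    by (simp add: vec_eq_iff ivec_def)
  moreover have "ivec (z *s u) = Re z *\<^sub>R ivec u + Im z *\<^sub>R rvec u"
    by (simp add: vec_eq_iff rvec_def ivec_def)
  ultimately show ?thesis by (simp add: ivec_mat)
qed

lemma cplx_sub_subspace:
  fixes C :: "(real^'n) set"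
  assumes "subspace C"
  shows "subspace (cplx_sub C)"
proof -
  have "0 \<in> cplx_sub C" unfolding cplx_sub_iff using subspace_0[OF assms]
    by (simp add: rvec_def ivec_def zero_vec_def)
  moreover have "\<forall>x\<in>cplx_sub C. \<forall>y\<in>cplx_sub C. x + y \<in> cplx_sub C"
  proof (intro ballI)
    fix x y :: "complex^'n" assume "x \<in> cplx_sub C" "y \<in> cplx_sub C"
    moreover have "rvec (x + y) = rvec x + rvec y" "ivec (x + y) = ivec x + ivec y"
      by (simp_all add: rvec_def ivec_def vec_eq_iff)
    ultimately show "x + y \<in> cplx_sub C" unfolding cplx_sub_iff
      using subspace_add[OF assms] by auto
  qed
  moreover have "\<forall>c. \<forall>x\<in>cplx_sub C. c *\<^sub>R x \<in> cplx_sub C"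
  proof (intro allI ballI)
    fix c :: real and x :: "complex^'n" assume "x \<in> cplx_sub C"
    moreover have "rvec (c *\<^sub>R x) = c *\<^sub>R rvec x" "ivec (c *\<^sub>R x) = c *\<^sub>R ivec x"
      by (simp_all add: rvec_def ivec_def vec_eq_iff)
    ultimately show "c *\<^sub>R x \<in> cplx_sub C" unfolding cplx_sub_iff
      using subspace_scale[OF assms] by auto
  qed
  ultimately show ?thesis unfolding subspace_def by blast
qed

lemma gersh:
  fixes A :: "real^'n^'n"
  assumes "rate_matrix A" "cplx_mat A *v v = z *s v" "Re z \<ge> 0" "z \<noteq> 0"
  shows "v = 0"
proof (rule ccontr)
  assume vne: "v \<noteq> 0"
  obtain i where i: "\<forall>j\<in>UNIV. cmod (v$j) \<le> cmod (v$i)"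
    using ex_max_on[of "UNIV::'n set" "\<lambda>j. cmod (v$j)"] by auto
  have vi: "v$i \<noteq> 0"
  proof
    assume "v$i = 0"
    then have "cmod (v$j) \<le> 0" for j using i by simp
    then have "\<forall>j. v$j = 0" by simp
    then show False using vne by (simp add: vec_eq_iff)
  qed
  let ?O = "UNIV - {i}"
  have nn: "A$i$j \<ge> 0" if "j \<in> ?O" for j using assms(1) that unfolding rate_matrix_def by auto
  have rs: "(\<Sum>j\<in>UNIV. A$i$j) = 0" using assms(1) unfolding rate_matrix_def by auto
  then have rs': "(\<Sum>j\<in>?O. A$i$j) = - A$i$i"
    using sum.remove[of UNIV i "\<lambda>j. A$i$j"] by simp
  have "(\<Sum>j\<in>UNIV. complex_of_real (A$i$j) * v$j) = z * v$i"
    using arg_cong[OF assms(2), of "\<lambda>w. w$i"] by (simp add: matrix_vector_mult_def cplx_mat_def)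
  then have "complex_of_real (A$i$i) * v$i + (\<Sum>j\<in>?O. complex_of_real (A$i$j) * v$j) = z * v$i"
    by (simp add: sum.remove)
  then have eq: "(z - complex_of_real (A$i$i)) * v$i = (\<Sum>j\<in>?O. complex_of_real (A$i$j) * v$j)"
    by (simp add: algebra_simps)
  have "cmod ((z - complex_of_real (A$i$i)) * v$i) \<le> (\<Sum>j\<in>?O. cmod (complex_of_real (A$i$j) * v$j))"
    unfolding eq by (rule norm_sum)
  also have "\<dots> = (\<Sum>j\<in>?O. A$i$j * cmod (v$j))"
    by (rule sum.cong) (use nn in \<open>auto simp: norm_mult\<close>)
  also have "\<dots> \<le> (\<Sum>j\<in>?O. A$i$j * cmod (v$i))"
    by (rule sum_mono) (use nn i in \<open>auto intro: mult_left_mono\<close>)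
  also have "\<dots> = (\<Sum>j\<in>?O. A$i$j) * cmod (v$i)" by (rule sum_distrib_right[symmetric])
  also have "\<dots> = - A$i$i * cmod (v$i)" using rs' by simp
  finally have "cmod (z - complex_of_real (A$i$i)) * cmod (v$i) \<le> - A$i$i * cmod (v$i)"
    by (simp add: norm_mult)
  moreover have "cmod (v$i) > 0" using vi by simp
  ultimately have le: "cmod (z - complex_of_real (A$i$i)) \<le> - A$i$i"
    by (metis minus_mult_left mult_le_cancel_right_pos)
  define q where "q = - A$i$i"
  have q0: "q \<ge> 0" using le unfolding q_def by (meson norm_ge_zero order_trans)
  have "cmod (z + complex_of_real q) \<le> q" using le unfolding q_def by simp
  then have "(cmod (z + complex_of_real q))^2 \<le> q^2" by (simp add: power_mono)
  then have "(Re z + q)^2 + (Im z)^2 \<le> q^2" by (simp add: cmod_power2)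
  then have "(Re z)^2 + (Im z)^2 + 2 * q * Re z \<le> 0" by (simp add: power2_eq_square algebra_simps)
  moreover have "q * Re z \<ge> 0" using q0 assms(3) by simp
  ultimately have "(Re z)^2 + (Im z)^2 \<le> 0" by linarith
  then have "Re z = 0" "Im z = 0"
    by (smt (verit) zero_le_power2 power2_eq_square mult_eq_0_iff)+
  then show False using assms(4) by (simp add: complex_eq_iff)
qed


lemma quot_ev_neg:
  fixes A :: "real^'n^'n"
  assumes "rate_matrix A" "ergodic_partition A P" "subspace C"
    and inv: "\<And>g. g \<in> C \<Longrightarrow> A *v g \<in> C" and ker: "{y. A *v y = 0} \<subseteq> C"
    and ev: "quot_eigenvalue A C z"
  shows "Re z < 0"
proof (rule ccontr)
  assume "\<not> Re z < 0"
  then have rz: "Re z \<ge> 0" by simp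
  obtain v where v: "v \<notin> cplx_sub C" "cplx_mat A *v v - z *s v \<in> cplx_sub C"
    using ev unfolding quot_eigenvalue_def by blast
  define f where "f = (\<lambda>u::complex^'n. cplx_mat A *v u - z *s u)"
  show False
  proof (cases "z = 0")
    case True
    then have "cplx_mat A *v v \<in> cplx_sub C" using v(2) by simp
    then have r1: "A *v rvec v \<in> C" and r2: "A *v ivec v \<in> C"
      unfolding cplx_sub_iff rvec_mat ivec_mat by auto
    have "rvec v \<in> C" by (rule real_quot[OF assms(1-3) inv ker r1])
    moreover have "ivec v \<in> C" by (rule real_quot[OF assms(1-3) inv ker r2])
    ultimately
    show False using v(1) unfolding cplx_sub_iff by simp
  next
    case False
    have m1: "cplx_mat A *v (r *\<^sub>R b) = r *\<^sub>R (cplx_mat A *v b)" for r :: real and b :: "complex^'n"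
      using linear_scale[OF matrix_vector_mul_linear[of "cplx_mat A"], of r b] by simp
    have m2: "z *s (r *\<^sub>R b) = r *\<^sub>R (z *s b)" for r and b :: "complex^'n"
      by (simp add: vec_eq_iff)
    have m3: "cplx_mat A *v (a + b) = cplx_mat A *v a + cplx_mat A *v b" for a b :: "complex^'n"
      by (rule matrix_vector_right_distrib)
    have m4: "z *s (a + b) = z *s a + z *s b" for a b :: "complex^'n"
      by (simp add: vec_eq_iff algebra_simps)
    have lin: "linear f"
      unfolding f_def
      by (rule linearI) (simp_all only: m1 m2 m3 m4 scaleR_diff_right, simp_all add: algebra_simps)
    have inj: "inj_on f (cplx_sub C)"
    proof (rule inj_onI)
      fix x y assume "f x = f y"
      then have "cplx_mat A *v (x - y) = z *s (x - y)"
        unfolding f_def by (simp add: matrix_vector_mult_diff_distrib vec_eq_iff algebra_simps)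
      then have "x - y = 0" using gersh[OF assms(1) _ rz False] by blast
      then show "x = y" by simp
    qed
    have img: "f ` cplx_sub C \<subseteq> cplx_sub C"
    proof
      fix w assume "w \<in> f ` cplx_sub C"
      then obtain u where u: "u \<in> cplx_sub C" "w = f u" by auto
      then have ru: "rvec u \<in> C" and iu: "ivec u \<in> C" unfolding cplx_sub_iff by auto
      have "A *v rvec u - Re z *\<^sub>R rvec u + Im z *\<^sub>R ivec u \<in> C"
        by (intro subspace_add[OF assms(3)] subspace_diff[OF assms(3)] subspace_scale[OF assms(3)] inv ru iu)
      moreover have "A *v ivec u - Re z *\<^sub>R ivec u - Im z *\<^sub>R rvec u \<in> C"
        by (intro subspace_diff[OF assms(3)] subspace_scale[OF assms(3)] inv ru iu)
      ultimately show "w \<in> cplx_sub C" unfolding u(2) f_def cplx_sub_iff rvec_f ivec_f by simp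
    qed
    have fS: "f ` cplx_sub C = cplx_sub C"
      by (rule inj_self_surj[OF lin cplx_sub_subspace[OF assms(3)] img inj])
    have "f v \<in> cplx_sub C" using v(2) unfolding f_def .
    then have "f v \<in> f ` cplx_sub C" unfolding fS .
    then obtain u where u: "u \<in> cplx_sub C" "f u = f v" by (elim imageE) (rule that, assumption, rule sym)
    have "cplx_mat A *v (u - v) = z *s (u - v)"
      using u(2) unfolding f_def by (simp add: matrix_vector_mult_diff_distrib vec_eq_iff algebra_simps)
    then have "u - v = 0" using gersh[OF assms(1) _ rz False] by blast
    then show False using u(1) v(1) by simp
  qed
qed

theorem proposition2:
  fixes A :: "real^'n^'n" and h :: "real^'n" and P :: "'n set set"
  assumes "rate_matrix A" and "ergodic_partition A P"
  shows "(stabilizable A h \<longleftrightarrow> {y. A *v y = 0} \<subseteq> ctrl_space A h)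
     \<and> (card P = 1 \<longrightarrow> stabilizable A h)
     \<and> (stabilizable A h \<longleftrightarrow> (\<forall>K\<in>P. indic_vec K \<in> ctrl_space A h))"
proof -
  let ?C = "ctrl_space A h"
  have sub: "subspace ?C" by (rule ctrl_sub)
  have inv: "\<And>g. g \<in> ?C \<Longrightarrow> A *v g \<in> ?C" by (rule ctrl_A)
  have main: "stabilizable A h \<longleftrightarrow> {y. A *v y = 0} \<subseteq> ?C"
  proof
    assume st: "stabilizable A h"
    show "{y. A *v y = 0} \<subseteq> ?C"
    proof (cases "?C = UNIV")
      case False
      then have hw: "quot_hurwitz A ?C" using st unfolding stabilizable_def by blast
      show ?thesis
      proof (rule ccontr)
        assume "\<not> {y. A *v y = 0} \<subseteq> ?C"
        then obtain y where y: "A *v y = 0" "y \<notin> ?C" by blast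
        define v where "v = (\<chi> i. complex_of_real (y$i))"
        have rv: "rvec v = y" and iv: "ivec v = 0"
          unfolding v_def rvec_def ivec_def by (simp_all add: vec_eq_iff)
        have "rvec (cplx_mat A *v v) = 0" "ivec (cplx_mat A *v v) = 0"
          unfolding rvec_mat ivec_mat rv iv using y(1) by simp_all
        then have "cplx_mat A *v v - 0 *s v \<in> cplx_sub ?C"
          unfolding cplx_sub_iff using subspace_0[OF sub] by simp
        moreover have "v \<notin> cplx_sub ?C" unfolding cplx_sub_iff rv using y(2) by simp
        ultimately have "quot_eigenvalue A ?C 0" unfolding quot_eigenvalue_def by blast
        then show False using hw unfolding quot_hurwitz_def by fastforce
      qed
    qed simp
  next
    assume ker: "{y. A *v y = 0} \<subseteq> ?C"
    have "quot_hurwitz A ?C" unfolding quot_hurwitz_def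
      using quot_ev_neg[OF assms sub inv ker] by blast
    then show "stabilizable A h" unfolding stabilizable_def by blast
  qed
  have iff2: "{y. A *v y = 0} \<subseteq> ?C \<longleftrightarrow> (\<forall>K\<in>P. indic_vec K \<in> ?C)"
    by (rule ker_sub_iff[OF assms sub])
  have card1: "card P = 1 \<longrightarrow> stabilizable A h"
  proof
    assume "card P = 1"
    then obtain K where K: "P = {K}" by (auto simp: card_Suc_eq)
    then have "K = UNIV" using assms(2) unfolding ergodic_partition_def by auto
    then have "indic_vec K = 1" by (simp add: indic_vec_def vec_eq_iff)
    then have "\<forall>K\<in>P. indic_vec K \<in> ?C" using K ctrl_one by simp
    then show "stabilizable A h" using main iff2 by blast
  qed
  show ?thesis using main iff2 card1 by blast
qed

end
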